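(* Let $m\in\mathbb{N}$. Then there is a set $\Gamma(m)\subset(0,1]^{m}$ with the following properties: (i) $\sharp\Gamma(m)\leq 2^{5m/2}$. (ii) For every $\{\varepsilon_{i}\}_{i=1}^{m}\in\Gamma(m)$, the numbers $m\varepsilon_{i}$ are positive integers for all $i\in\{1,\dots,m\}$, $\sum_{i=1}^{m}\varepsilon_{i}\leq 3$, and for all $t>0$, $\sharp\{i\in\{1,\dots,m\}:\varepsilon_{i}\geq t\}\leq 2/t$. (iii) For every sequence $\{\alpha_{i}\}_{i=1}^{m}$ with each $\alpha_{i}\in[0,1]$ and $\sum_{i=1}^{m}\alpha_{i}=1$ there is $\{\varepsilon_{i}\}_{i=1}^{m}\in\Gamma(m)$ such that $\alpha_{i}\leq\varepsilon_{i}$ for all $i\in\{1,\dots,m\}$.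
   Context: $\sharp A$ denotes the cardinality of a finite set $A$. *)

theory Defs
  imports "HOL-Analysis.Analysis"
begin

end

theory Submission
  imports Defs
begin

definition GG :: "nat \<Rightarrow> (nat \<Rightarrow> real) set" where
  "GG m = {\<epsilon>. (\<forall>i\<in>{1..m}. 0 < \<epsilon> i \<and> \<epsilon> i \<le> 1 \<and> (\<exists>k::nat. k > 0 \<and> real m * \<epsilon> i = real k))
     \<and> (\<forall>i. i \<notin> {1..m} \<longrightarrow> \<epsilon> i = 0) \<and> (\<Sum>i=1..m. \<epsilon> i) \<le> 2}"

definition SS :: "nat \<Rightarrow> (nat \<Rightarrow> real) \<Rightarrow> nat \<Rightarrow> real" where
  "SS m \<epsilon> j = (\<Sum>i=1..j. real m * \<epsilon> i)"

lemma SS_Suc: "SS m e (Suc j) = SS m e j + real m * e (Suc j)"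
  unfolding SS_def by simp

lemma SS_mono:
  assumes "e \<in> GG m" "j < j'" "j' \<le> m"
  shows "SS m e j < SS m e j'"
  using assms(2,3)
proof (induction j')
  case 0 then show ?case by simp
next
  case (Suc j')
  have pos: "real m * e (Suc j') > 0"
    using assms(1) Suc.prems by (auto simp: GG_def)
  show ?case
  proof (cases "j = j'")
    case True then show ?thesis using pos SS_Suc by simp
  next
    case False
    then have "SS m e j < SS m e j'" using Suc by simp
    then show ?thesis using pos SS_Suc[of m e j'] by simp
  qed
qed

lemma SS_nat:
  assumes "e \<in> GG m" "j \<le> m"
  shows "SS m e j \<in> \<nat>"
  using assms(2)
proof (induction j)
  case 0 then show ?case by (simp add: SS_def)
next
  case (Suc j)
  have "Suc j \<in> {1..m}" using Suc.prems by simp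
  then have "\<exists>k::nat. real m * e (Suc j) = real k" using assms(1) unfolding GG_def by blast
  then obtain k :: nat where "real m * e (Suc j) = real k" by blast
  then show ?case using Suc SS_Suc[of m e j] by (simp add: Nats_add)
qed

lemma SS_ge1:
  assumes "e \<in> GG m" "1 \<le> j" "j \<le> m"
  shows "SS m e j \<ge> 1"
proof -
  have "(1::nat) \<in> {1..m}" using assms by simp
  then have "\<exists>k::nat. k > 0 \<and> real m * e 1 = real k" using assms(1) unfolding GG_def by blast
  then obtain k :: nat where "k > 0" "real m * e 1 = real k" by blast
  then have "SS m e 1 \<ge> 1" by (simp add: SS_def)
  moreover have "SS m e 1 \<le> SS m e j"
    using SS_mono[OF assms(1), of 1 j] assms by (cases "j = 1") auto
  ultimately show ?thesis by simp
qed

lemma SS_le: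
  assumes "e \<in> GG m" "j \<le> m"
  shows "SS m e j \<le> 2 * real m"
proof -
  have "SS m e j \<le> SS m e m"
    using SS_mono[OF assms(1), of j m] assms by (cases "j = m") auto
  also have "\<dots> = real m * (\<Sum>i=1..m. e i)" by (simp add: SS_def sum_distrib_left)
  also have "\<dots> \<le> real m * 2" using assms(1) by (intro mult_left_mono) (auto simp: GG_def)
  finally show ?thesis by simp
qed

definition FF :: "nat \<Rightarrow> (nat \<Rightarrow> real) \<Rightarrow> real set" where
  "FF m e = set (map (SS m e) [1..<Suc m])"

lemma FF_in:
  assumes "e \<in> GG m"
  shows "FF m e \<in> Pow (real ` {1..2*m})"
proof -
  have "SS m e j \<in> real ` {1..2*m}" if "j \<in> {1..m}" for j
  proof -
    from SS_nat[OF assms, of j] that obtain n :: nat where n: "SS m e j = real n"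
      by (auto elim: Nats_cases)
    have "1 \<le> real n" "real n \<le> 2 * real m" using n SS_ge1[OF assms, of j] SS_le[OF assms, of j] that by auto
    then have "n \<in> {1..2*m}" by auto
    then show ?thesis using n by auto
  qed
  then show ?thesis by (auto simp: FF_def)
qed

lemma FF_sorted:
  assumes "e \<in> GG m"
  shows "sorted_wrt (<) (map (SS m e) [1..<Suc m])"
  unfolding sorted_wrt_map
  by (rule sorted_wrt_mono_rel[OF _ sorted_wrt_upt]) (use SS_mono[OF assms] in auto)

lemma FF_inj: "inj_on (FF m) (GG m)"
proof (rule inj_onI)
  fix e e' assume e: "e \<in> GG m" and e': "e' \<in> GG m" and eq: "FF m e = FF m e'"
  have L: "map (SS m e) [1..<Suc m] = map (SS m e') [1..<Suc m]"
    using strict_sorted_equal[OF FF_sorted[OF e'] FF_sorted[OF e]] eq by (simp add: FF_def)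
  have S: "SS m e j = SS m e' j" if "j \<le> m" for j
  proof (cases "j = 0")
    case True then show ?thesis by (simp add: SS_def)
  next
    case False
    have "map (SS m e) [1..<Suc m] ! (j - 1) = map (SS m e') [1..<Suc m] ! (j - 1)" using L by (simp only:)
    moreover have "map f [1..<Suc m] ! (j - 1) = f j" for f :: "nat \<Rightarrow> real"
      using False that by (simp add: nth_map del: upt_Suc)
    ultimately show ?thesis by simp
  qed
  show "e = e'"
  proof
    fix i
    show "e i = e' i"
    proof (cases "i \<in> {1..m}")
      case True
      then obtain j where j: "i = Suc j" "j < m" by (cases i) auto
      have "SS m e (Suc j) = SS m e' (Suc j)" "SS m e j = SS m e' j" using S j by auto
      then have "real m * e i = real m * e' i" using SS_Suc[of m e j] SS_Suc[of m e' j] j by simp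
      then show ?thesis using j by simp
    next
      case False then show ?thesis using e e' by (auto simp: GG_def)
    qed
  qed
qed

lemma GG_card: "finite (GG m) \<and> real (card (GG m)) \<le> 2 powr (5 * real m / 2)"
proof -
  have sub: "FF m ` GG m \<subseteq> Pow (real ` {1..2*m})" using FF_in by auto
  have fin: "finite (GG m)"
    using finite_imageD[OF finite_subset[OF sub] FF_inj] by simp
  have "card (GG m) = card (FF m ` GG m)" using card_image[OF FF_inj] by simp
  also have "\<dots> \<le> card (Pow (real ` {1..2*m}))" by (rule card_mono) (use sub in auto)
  also have "\<dots> = 2 ^ (2*m)" by (simp add: card_Pow card_image)
  finally have "real (card (GG m)) \<le> real (2 ^ (2*m))"
    by (simp only: of_nat_le_iff)
  then have "real (card (GG m)) \<le> 2 ^ (2*m)" by simp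
  also have "(2::real) ^ (2*m) = 2 powr (real (2*m))" by (rule powr_realpow[symmetric]) simp
  also have "\<dots> \<le> 2 powr (5 * real m / 2)" by (intro powr_mono) auto
  finally show ?thesis using fin by simp
qed

lemma markov:
  assumes "e \<in> GG m" "t > 0"
  shows "real (card {i\<in>{1..m}. e i \<ge> t}) \<le> 2 / t"
proof -
  let ?A = "{i\<in>{1..m}. e i \<ge> t}"
  have "real (card ?A) * t = (\<Sum>i\<in>?A. t)" by simp
  also have "\<dots> \<le> (\<Sum>i\<in>?A. e i)" by (rule sum_mono) auto
  also have "\<dots> \<le> (\<Sum>i=1..m. e i)"
    by (rule sum_mono2) (use assms(1) in \<open>auto simp: GG_def less_imp_le\<close>)
  also have "\<dots> \<le> 2" using assms(1) by (auto simp: GG_def)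
  finally show ?thesis using assms(2) by (simp add: field_simps)
qed

lemma cover:
  assumes m: "m > 0" and a: "\<forall>i\<in>{1..m}. 0 \<le> \<alpha> i \<and> \<alpha> i \<le> 1" and s: "(\<Sum>i=1..m. \<alpha> i) = 1"
  shows "\<exists>\<epsilon>\<in>GG m. \<forall>i\<in>{1..m}. \<alpha> i \<le> \<epsilon> i"
proof -
  define k where "k i = nat (max 1 \<lceil>real m * \<alpha> i\<rceil>)" for i
  define e where "e i = (if i \<in> {1..m} then real (k i) / real m else 0)" for i
  have kpos: "k i > 0" for i by (simp add: k_def)
  have kle: "real (k i) \<le> real m" if "i \<in> {1..m}" for i
  proof -
    have "real m * \<alpha> i \<le> real m" using a that m by simp
    then have "\<lceil>real m * \<alpha> i\<rceil> \<le> int m" by (simp add: ceiling_le_iff)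
    then show ?thesis using m by (simp add: k_def)
  qed
  have kup: "real (k i) \<le> real m * \<alpha> i + 1" if "i \<in> {1..m}" for i
  proof -
    have "0 \<le> real m * \<alpha> i" using a that by simp
    moreover have "real_of_int \<lceil>real m * \<alpha> i\<rceil> \<le> real m * \<alpha> i + 1" by linarith
    ultimately have "max 1 (real_of_int \<lceil>real m * \<alpha> i\<rceil>) \<le> real m * \<alpha> i + 1" by simp
    moreover have "real (k i) = max 1 (real_of_int \<lceil>real m * \<alpha> i\<rceil>)"
      unfolding k_def by (simp add: of_int_max[symmetric])
    ultimately show ?thesis by simp
  qed
  have klo: "real m * \<alpha> i \<le> real (k i)" for i
  proof -
    have "real m * \<alpha> i \<le> real_of_int \<lceil>real m * \<alpha> i\<rceil>" by linarith
    moreover have "real (k i) = max 1 (real_of_int \<lceil>real m * \<alpha> i\<rceil>)"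
      unfolding k_def by (simp add: of_int_max[symmetric])
    ultimately show ?thesis by (simp add: le_max_iff_disj)
  qed
  have "(\<Sum>i=1..m. e i) \<le> (\<Sum>i=1..m. \<alpha> i + 1 / real m)"
  proof (rule sum_mono)
    fix i assume i: "i \<in> {1..m}"
    have "real (k i) / real m \<le> (real m * \<alpha> i + 1) / real m"
      using kup[OF i] m by (simp add: divide_right_mono)
    also have "\<dots> = \<alpha> i + 1 / real m" using m by (simp add: field_simps)
    finally show "e i \<le> \<alpha> i + 1 / real m" using i by (simp add: e_def)
  qed
  also have "\<dots> = 2" using s m by (simp add: sum.distrib)
  finally have sum2: "(\<Sum>i=1..m. e i) \<le> 2" .
  have "e \<in> GG m"
    unfolding GG_def using kpos kle m sum2 by (auto simp: e_def intro!: exI[of _ "k _"])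
  moreover have "\<forall>i\<in>{1..m}. \<alpha> i \<le> e i"
  proof
    fix i assume i: "i \<in> {1..m}"
    show "\<alpha> i \<le> e i" using klo[of i] m i by (simp add: e_def field_simps)
  qed
  ultimately show ?thesis by blast
qed

theorem lemma2p2:
  fixes m :: nat
  shows "\<exists>\<Gamma> :: (nat \<Rightarrow> real) set.
     (\<forall>\<epsilon>\<in>\<Gamma>. (\<forall>i\<in>{1..m}. 0 < \<epsilon> i \<and> \<epsilon> i \<le> 1) \<and> (\<forall>i. i \<notin> {1..m} \<longrightarrow> \<epsilon> i = 0)) \<and>
     finite \<Gamma> \<and> real (card \<Gamma>) \<le> 2 powr (5 * real m / 2) \<and>
     (\<forall>\<epsilon>\<in>\<Gamma>. (\<forall>i\<in>{1..m}. \<exists>k::nat. k > 0 \<and> real m * \<epsilon> i = real k) \<and>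
                 (\<Sum>i=1..m. \<epsilon> i) \<le> 3 \<and>
                 (\<forall>t::real. t > 0 \<longrightarrow> real (card {i\<in>{1..m}. \<epsilon> i \<ge> t}) \<le> 2 / t)) \<and>
     (\<forall>\<alpha> :: nat \<Rightarrow> real. (\<forall>i\<in>{1..m}. 0 \<le> \<alpha> i \<and> \<alpha> i \<le> 1) \<and> (\<Sum>i=1..m. \<alpha> i) = 1 \<longrightarrow>
        (\<exists>\<epsilon>\<in>\<Gamma>. \<forall>i\<in>{1..m}. \<alpha> i \<le> \<epsilon> i))"
proof -
  have A: "\<forall>\<epsilon>\<in>GG m. (\<forall>i\<in>{1..m}. 0 < \<epsilon> i \<and> \<epsilon> i \<le> 1) \<and> (\<forall>i. i \<notin> {1..m} \<longrightarrow> \<epsilon> i = 0)"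
    by (auto simp: GG_def)
  have B: "\<forall>\<epsilon>\<in>GG m. (\<forall>i\<in>{1..m}. \<exists>k::nat. k > 0 \<and> real m * \<epsilon> i = real k) \<and>
                 (\<Sum>i=1..m. \<epsilon> i) \<le> 3 \<and>
                 (\<forall>t::real. t > 0 \<longrightarrow> real (card {i\<in>{1..m}. \<epsilon> i \<ge> t}) \<le> 2 / t)"
    using markov by (auto simp: GG_def)
  have C: "\<forall>\<alpha> :: nat \<Rightarrow> real. (\<forall>i\<in>{1..m}. 0 \<le> \<alpha> i \<and> \<alpha> i \<le> 1) \<and> (\<Sum>i=1..m. \<alpha> i) = 1 \<longrightarrow>
        (\<exists>\<epsilon>\<in>GG m. \<forall>i\<in>{1..m}. \<alpha> i \<le> \<epsilon> i)"
  proof (intro allI impI)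
    fix \<alpha> :: "nat \<Rightarrow> real"
    assume h: "(\<forall>i\<in>{1..m}. 0 \<le> \<alpha> i \<and> \<alpha> i \<le> 1) \<and> (\<Sum>i=1..m. \<alpha> i) = 1"
    then have "m > 0" by (cases m) auto
    then show "\<exists>\<epsilon>\<in>GG m. \<forall>i\<in>{1..m}. \<alpha> i \<le> \<epsilon> i" using cover h by blast
  qed
  show ?thesis
    apply (rule exI[of _ "GG m"])
    apply (intro conjI)
        apply (rule A)
       apply (simp add: GG_card)
      apply (simp add: GG_card)
     apply (rule B)
    apply (rule C)
    done
qed

end
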